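(* In the setting described in the context, if $g_m$ is a $\Phi$-linear combination of elements of the form $w\,g(i,\varepsilon,\sigma)$, where $q_i\varepsilon\sigma\to q_jT_\alpha T_\beta$ is a command of $M$ and $w\in W_{\varepsilon\sigma}$, then $m\in S$.
   Context: $\Phi$ is a commutative ring with unity $1\ne0$, regarded as a differential ring with the commuting derivations $\delta_1,\delta_2$ acting as zero. $S\subseteq\mathbb{N}$ is recursively enumerable and $M$ is a two-tape acyclic Minsky machine with states $q_0,\ldots,q_n$ ($q_0$ terminal) such that for every $x\in\mathbb{N}$, starting at configuration $[1,2^{2^x},0]$, $M$ reaches $[0,1,0]$ in finitely many steps if $x\in S$ and operates infinitely if $x\notin S$. Minsky machine conventions: two tapes infinite to the right with cells $0,1,2,\ldots$; cell $0$ contains $1$, all others $0$; a configuration $[i,a,b]$ means state $q_i$, head at cell $a$ of tape 1 and cell $b$ of tape 2. Commands are $q_i\varepsilon\sigma\to q_jT_\alpha T_\beta$ with $1\le i\le n$, $0\le j\le n$, $\varepsilon,\sigma\in\{0,1\}$, $\alpha,\beta\in\{-1,0,1\}$, $\alpha\ge0$ if $\varepsilon=1$, $\beta\ge0$ if $\sigma=1$, at most one per triple $(i,\varepsilon,\sigma)$; such a command applies to $[i,a,b]$ when ($\varepsilon=1$ iff $a=0$) and ($\sigma=1$ iff $b=0$), producing $[j,a+\alpha,b+\beta]$. Acyclic means no configuration recurs after a positive number of steps. $A=\Phi\{x_1,x_2,q_0,\ldots,q_n\}$ is the differential polynomial ring w.r.t. $\delta_1,\delta_2$ (polynomial ring in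 independent variables $\delta_1^a\delta_2^b(y)$, $y\in\{x_1,x_2,q_0,\ldots,q_n\}$, $\delta_1,\delta_2$ raising the corresponding exponent). $J$ is the differential ideal generated by $\delta_1(x_2),\delta_2(x_1)$, and $B=A/J$ with induced derivations. For each command of $M$, $g(i,\varepsilon,\sigma)$ is the image in $B$ of $x_1^{\varepsilon}x_2^{\sigma}\delta_1^{1-\varepsilon}\delta_2^{1-\sigma}(q_i)-x_1^{\varepsilon}x_2^{\sigma}\delta_1^{1-\varepsilon+\alpha}\delta_2^{1-\sigma+\beta}(q_j)$; $g_m$ is the image of $x_1x_2\delta_1^{2^{2^m}}(q_1)-x_1x_2\delta_1(q_0)$. $B^e$ is the ring which is the free left $B$-module on the basis $\{\delta_1^i\delta_2^j: i,j\ge0\}$ with $\delta_l$ commuting and $\delta_l b=b\delta_l+\delta_l(b)$; $B$ is a left $B^e$-module ($b$ acting by multiplication, $\delta_l$ as derivations). $W_{\varepsilon\sigma}$ is the set of elements $x_1^{1-\varepsilon}x_2^{1-\sigma}\delta_1^i\delta_2^j\in B^e$ with $i,j\ge0$, $i=0$ if $\varepsilon=1$, $j=0$ if $\sigma=1$ (so $W_{11}=\{1\}$). *)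

theory Defs
  imports "HOL-Library.Poly_Mapping"
begin

text \<open>A command  q_i eps sigma -> q_j T_alpha T_beta  is the tuple (i, eps, sigma, j, alpha, beta),
  with eps, sigma in {0,1} (as naturals) and alpha, beta in {-1,0,1} (as integers).\<close>

type_synonym cmd = "nat \<times> nat \<times> nat \<times> nat \<times> int \<times> int"
type_synonym config = "nat \<times> nat \<times> nat"

definition valid_cmd :: "nat \<Rightarrow> cmd \<Rightarrow> bool" where
  "valid_cmd n c = (case c of (i, e, s, j, \<alpha>, \<beta>) \<Rightarrow>
     1 \<le> i \<and> i \<le> n \<and> j \<le> n \<and> e \<in> {0,1} \<and> s \<in> {0,1} \<and>
     \<alpha> \<in> {-1,0,1} \<and> \<beta> \<in> {-1,0,1} \<and> (e = 1 \<longrightarrow> \<alpha> \<ge> 0) \<and> (s = 1 \<longrightarrow> \<beta> \<ge> 0))"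

definition minsky_machine :: "nat \<Rightarrow> cmd set \<Rightarrow> bool" where
  "minsky_machine n M = ((\<forall>c\<in>M. valid_cmd n c) \<and>
     (\<forall>c\<in>M. \<forall>c'\<in>M. fst c = fst c' \<and> fst (snd c) = fst (snd c') \<and>
        fst (snd (snd c)) = fst (snd (snd c')) \<longrightarrow> c = c'))"

definition mstep :: "cmd set \<Rightarrow> config \<Rightarrow> config \<Rightarrow> bool" where
  "mstep M c c' = (case c of (i, a, b) \<Rightarrow> case c' of (j', a', b') \<Rightarrow>
     (\<exists>e s j \<alpha> \<beta>. (i, e, s, j, \<alpha>, \<beta>) \<in> M \<and> (e = 1 \<longleftrightarrow> a = 0) \<and> (s = 1 \<longleftrightarrow> b = 0) \<and>
        j' = j \<and> int a' = int a + \<alpha> \<and> int b' = int b + \<beta>))"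

definition acyclic_machine :: "cmd set \<Rightarrow> bool" where
  "acyclic_machine M = (\<forall>c. \<not> (mstep M)\<^sup>+\<^sup>+ c c)"

definition reaches :: "cmd set \<Rightarrow> config \<Rightarrow> config \<Rightarrow> bool" where
  "reaches M c d = (mstep M)\<^sup>*\<^sup>* c d"

definition runs_forever :: "cmd set \<Rightarrow> config \<Rightarrow> bool" where
  "runs_forever M c = (\<forall>d. (mstep M)\<^sup>*\<^sup>* c d \<longrightarrow> (\<exists>d'. mstep M d d'))"

datatype base = X1 | X2 | Q nat

text \<open>The variable (y, a, b) stands for delta_1^a delta_2^b (y).\<close>
type_synonym dvar = "base \<times> nat \<times> nat"

type_synonym 'a dpoly = "(dvar \<Rightarrow>\<^sub>0 nat) \<Rightarrow>\<^sub>0 'a"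

definition allowed_var :: "nat \<Rightarrow> dvar \<Rightarrow> bool" where
  "allowed_var n v = (case fst v of Q i \<Rightarrow> i \<le> n | _ \<Rightarrow> True)"

definition A_carrier :: "nat \<Rightarrow> 'a::comm_ring_1 dpoly set" where
  "A_carrier n = {p :: 'a dpoly. \<forall>mn\<in>Poly_Mapping.keys p. \<forall>v\<in>Poly_Mapping.keys mn. allowed_var n v}"

definition V :: "dvar \<Rightarrow> 'a::comm_ring_1 dpoly" where
  "V v = Poly_Mapping.single (Poly_Mapping.single v 1) 1"

definition const :: "'a::comm_ring_1 \<Rightarrow> 'a dpoly" where
  "const c = Poly_Mapping.single 0 c"

definition sh1 :: "dvar \<Rightarrow> dvar" where "sh1 v = (case v of (y, a, b) \<Rightarrow> (y, Suc a, b))"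
definition sh2 :: "dvar \<Rightarrow> dvar" where "sh2 v = (case v of (y, a, b) \<Rightarrow> (y, a, Suc b))"

text \<open>The derivation of the polynomial ring determined by a map on variables
  (delta(var) = var'), extended by the Leibniz rule and Phi-linearity.\<close>
definition dderiv :: "(dvar \<Rightarrow> dvar) \<Rightarrow> 'a::comm_ring_1 dpoly \<Rightarrow> 'a dpoly" where
  "dderiv d p = (\<Sum>m\<in>Poly_Mapping.keys p. \<Sum>v\<in>Poly_Mapping.keys m.
      Poly_Mapping.single (m - Poly_Mapping.single v 1 + Poly_Mapping.single (d v) 1)
                          (Poly_Mapping.lookup p m * of_nat (Poly_Mapping.lookup m v)))"

definition delta1 :: "'a::comm_ring_1 dpoly \<Rightarrow> 'a dpoly" where "delta1 = dderiv sh1"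
definition delta2 :: "'a::comm_ring_1 dpoly \<Rightarrow> 'a dpoly" where "delta2 = dderiv sh2"

definition x1 :: "'a::comm_ring_1 dpoly" where "x1 = V (X1, 0, 0)"
definition x2 :: "'a::comm_ring_1 dpoly" where "x2 = V (X2, 0, 0)"
definition q :: "nat \<Rightarrow> 'a::comm_ring_1 dpoly" where "q i = V (Q i, 0, 0)"

definition diff_ideal :: "nat \<Rightarrow> 'a::comm_ring_1 dpoly set \<Rightarrow> 'a dpoly set" where
  "diff_ideal n G = \<Inter> {I. I \<subseteq> A_carrier n \<and> G \<subseteq> I \<and> 0 \<in> I \<and>
       (\<forall>a\<in>I. \<forall>b\<in>I. a + b \<in> I) \<and> (\<forall>r\<in>A_carrier n. \<forall>a\<in>I. r * a \<in> I) \<and>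
       (\<forall>a\<in>I. delta1 a \<in> I) \<and> (\<forall>a\<in>I. delta2 a \<in> I)}"

definition J :: "nat \<Rightarrow> 'a::comm_ring_1 dpoly set" where
  "J n = diff_ideal n {delta1 x2, delta2 x1}"

text \<open>B = A/J: elements of B are represented by elements of A; two represent the same
  element of B iff their difference lies in J.\<close>
definition B_eq :: "nat \<Rightarrow> 'a::comm_ring_1 dpoly \<Rightarrow> 'a dpoly \<Rightarrow> bool" where
  "B_eq n a b = (a - b \<in> J n)"

definition gcmd :: "cmd \<Rightarrow> 'a::comm_ring_1 dpoly" where
  "gcmd c = (case c of (i, e, s, j, \<alpha>, \<beta>) \<Rightarrow>
     x1 ^ e * x2 ^ s * V (Q i, 1 - e, 1 - s)
     - x1 ^ e * x2 ^ s * V (Q j, nat (1 - int e + \<alpha>), nat (1 - int s + \<beta>)))"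

definition gm :: "nat \<Rightarrow> 'a::comm_ring_1 dpoly" where
  "gm m = x1 * x2 * V (Q 1, 2 ^ (2 ^ m), 0) - x1 * x2 * V (Q 0, 1, 0)"

text \<open>w = x_1^(1-eps) x_2^(1-sigma) delta_1^a delta_2^b is in W_{eps sigma} iff
  (eps = 1 --> a = 0) and (sigma = 1 --> b = 0).\<close>
definition inW :: "nat \<Rightarrow> nat \<Rightarrow> nat \<Rightarrow> nat \<Rightarrow> bool" where
  "inW e s a b = ((e = 1 \<longrightarrow> a = 0) \<and> (s = 1 \<longrightarrow> b = 0))"

definition actW :: "nat \<Rightarrow> nat \<Rightarrow> nat \<Rightarrow> nat \<Rightarrow> 'a::comm_ring_1 dpoly \<Rightarrow> 'a dpoly" where
  "actW e s a b f = x1 ^ (1 - e) * x2 ^ (1 - s) * (delta1 ^^ a) ((delta2 ^^ b) f)"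

definition cmd_e :: "cmd \<Rightarrow> nat" where "cmd_e c = fst (snd c)"
definition cmd_s :: "cmd \<Rightarrow> nat" where "cmd_s c = fst (snd (snd c))"

end

theory Submission
  imports Defs
begin

definition allk :: "((dvar \<Rightarrow>\<^sub>0 nat) \<Rightarrow> bool) \<Rightarrow> 'a::comm_ring_1 dpoly \<Rightarrow> bool" where
  "allk P p = (\<forall>m\<in>Poly_Mapping.keys p. P m)"

lemma allk_0[simp]: "allk P 0" by (simp add: allk_def)
lemma allk_add: "allk P p \<Longrightarrow> allk P r2 \<Longrightarrow> allk P (p + r2)"
  unfolding allk_def using keys_add[of p r2] by auto
lemma allk_diff: "allk P p \<Longrightarrow> allk P r2 \<Longrightarrow> allk P (p - r2)"
  unfolding allk_def using keys_diff[of p r2] by auto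
lemma allk_single: "P k \<Longrightarrow> allk P (Poly_Mapping.single k c)"
  unfolding allk_def by simp
lemma allk_sum: "(\<And>x. x \<in> A \<Longrightarrow> allk P (f x)) \<Longrightarrow> allk P (sum f A)"
  by (induction A rule: infinite_finite_induct) (auto intro: allk_add)
lemma allk_mult:
  assumes "\<And>m1 m2. P1 m1 \<Longrightarrow> P2 m2 \<Longrightarrow> P3 (m1 + m2)" "allk P1 r" "allk P2 a"
  shows "allk P3 (r * a)"
  using assms keys_mult[of r a] unfolding allk_def by fastforce

lemma dderiv_alt:
  assumes "finite F" "Poly_Mapping.keys p \<subseteq> F"
  shows "dderiv d p = (\<Sum>m\<in>F. \<Sum>v\<in>Poly_Mapping.keys m.
      Poly_Mapping.single (m - Poly_Mapping.single v 1 + Poly_Mapping.single (d v) 1)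
                          (Poly_Mapping.lookup p m * of_nat (Poly_Mapping.lookup m v)))"
  unfolding dderiv_def
  by (rule sum.mono_neutral_left[OF assms]) (auto simp: in_keys_iff)

lemma dderiv_diff: "dderiv d (p - r2) = dderiv d p - dderiv d r2"
proof -
  let ?F = "Poly_Mapping.keys p \<union> Poly_Mapping.keys r2"
  have f: "finite ?F" by simp
  have k: "Poly_Mapping.keys (p - r2) \<subseteq> ?F" by (rule keys_diff)
  show ?thesis
    unfolding dderiv_alt[OF f k] dderiv_alt[OF f Un_upper1] dderiv_alt[OF f Un_upper2]
    by (simp add: lookup_minus left_diff_distrib single_diff sum_subtractf)
qed

lemma dderiv_single: "dderiv d (Poly_Mapping.single m c) = (\<Sum>v\<in>Poly_Mapping.keys m.
      Poly_Mapping.single (m - Poly_Mapping.single v 1 + Poly_Mapping.single (d v) 1)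
                          (c * of_nat (Poly_Mapping.lookup m v)))"
  by (subst dderiv_alt[of "{m}"]) auto

lemma dderiv_V: "dderiv d (V v) = V (d v)"
  unfolding V_def dderiv_single by simp

lemma allk_dderiv:
  assumes "\<And>m v. P m \<Longrightarrow> v \<in> Poly_Mapping.keys m \<Longrightarrow> P (m - Poly_Mapping.single v 1 + Poly_Mapping.single (d v) 1)"
    "allk P p"
  shows "allk P (dderiv d p)"
  unfolding dderiv_def
proof (intro allk_sum allk_single)
  fix m v assume "m \<in> Poly_Mapping.keys p" "v \<in> Poly_Mapping.keys m"
  then show "P (m - Poly_Mapping.single v 1 + Poly_Mapping.single (d v) 1)"
    using assms unfolding allk_def by blast
qed


fun badv :: "dvar \<Rightarrow> bool" where
  "badv (X1, a, b) = (b \<ge> 1)" | "badv (X2, a, b) = (a \<ge> 1)" | "badv (Q i, a, b) = False"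

definition badm :: "(dvar \<Rightarrow>\<^sub>0 nat) \<Rightarrow> bool" where
  "badm m = (\<exists>v\<in>Poly_Mapping.keys m. badv v)"

lemma badm_add: "badm m2 \<Longrightarrow> badm (m1 + m2)"
  unfolding badm_def by (auto simp: in_keys_iff lookup_add)

lemma badm_shift:
  assumes "badm m" "v \<in> Poly_Mapping.keys m" "\<And>u. badv u \<Longrightarrow> badv (d u)"
  shows "badm (m - Poly_Mapping.single v 1 + Poly_Mapping.single (d v) 1)"
proof -
  obtain b where b: "b \<in> Poly_Mapping.keys m" "badv b" using assms(1) badm_def by blast
  show ?thesis
  proof (cases "b = v")
    case True
    then have "d v \<in> Poly_Mapping.keys (m - Poly_Mapping.single v 1 + Poly_Mapping.single (d v) 1)"
      by (auto simp: in_keys_iff lookup_add lookup_minus lookup_single when_def)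
    then show ?thesis using assms(3) b True unfolding badm_def by blast
  next
    case False
    then have "b \<in> Poly_Mapping.keys (m - Poly_Mapping.single v 1 + Poly_Mapping.single (d v) 1)"
      using b(1) by (auto simp: in_keys_iff lookup_add lookup_minus lookup_single when_def)
    then show ?thesis using b unfolding badm_def by blast
  qed
qed

lemma badv_sh1: "badv u \<Longrightarrow> badv (sh1 u)"
  by (cases u) (auto simp: sh1_def elim: badv.elims)
lemma badv_sh2: "badv u \<Longrightarrow> badv (sh2 u)"
  by (cases u) (auto simp: sh2_def elim: badv.elims)

lemma Zb_delta1: "allk badm p \<Longrightarrow> allk badm (delta1 p)"
  unfolding delta1_def
proof (rule allk_dderiv)
  fix m v assume "badm m" "v \<in> Poly_Mapping.keys m"
  then show "badm (m - Poly_Mapping.single v 1 + Poly_Mapping.single (sh1 v) 1)"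
    using badm_shift badv_sh1 by blast
qed
lemma Zb_delta2: "allk badm p \<Longrightarrow> allk badm (delta2 p)"
  unfolding delta2_def
proof (rule allk_dderiv)
  fix m v assume "badm m" "v \<in> Poly_Mapping.keys m"
  then show "badm (m - Poly_Mapping.single v 1 + Poly_Mapping.single (sh2 v) 1)"
    using badm_shift badv_sh2 by blast
qed

definition Pa :: "nat \<Rightarrow> (dvar \<Rightarrow>\<^sub>0 nat) \<Rightarrow> bool" where
  "Pa n m = (\<forall>v\<in>Poly_Mapping.keys m. allowed_var n v)"

lemma A_carrier_allk: "A_carrier n = {p. allk (Pa n) p}"
  unfolding A_carrier_def allk_def Pa_def by simp

lemma Pa_add: "Pa n m1 \<Longrightarrow> Pa n m2 \<Longrightarrow> Pa n (m1 + m2)"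
  unfolding Pa_def using keys_add[of m1 m2] by auto

lemma Pa_shift:
  assumes "Pa n m" "\<And>u. fst (d u) = fst u" "v \<in> Poly_Mapping.keys m"
  shows "Pa n (m - Poly_Mapping.single v 1 + Poly_Mapping.single (d v) 1)"
proof -
  have "Poly_Mapping.keys (m - Poly_Mapping.single v 1 + Poly_Mapping.single (d v) 1)
        \<subseteq> Poly_Mapping.keys m \<union> {d v}"
    by (auto simp: in_keys_iff lookup_add lookup_minus lookup_single when_def split: if_splits)
  moreover have "allowed_var n v" using assms(1,3) unfolding Pa_def by blast
  then have "allowed_var n (d v)" using assms(2)[of v] unfolding allowed_var_def by simp
  ultimately show ?thesis using assms(1) unfolding Pa_def by blast
qed


lemma Pa_delta1: "allk (Pa n) p \<Longrightarrow> allk (Pa n) (delta1 p)"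
  unfolding delta1_def
proof (rule allk_dderiv)
  fix m v assume "Pa n m" "v \<in> Poly_Mapping.keys m"
  then show "Pa n (m - Poly_Mapping.single v 1 + Poly_Mapping.single (sh1 v) 1)"
    by (intro Pa_shift) (auto simp: sh1_def split: prod.splits)
qed

lemma Pa_delta2: "allk (Pa n) p \<Longrightarrow> allk (Pa n) (delta2 p)"
  unfolding delta2_def
proof (rule allk_dderiv)
  fix m v assume "Pa n m" "v \<in> Poly_Mapping.keys m"
  then show "Pa n (m - Poly_Mapping.single v 1 + Poly_Mapping.single (sh2 v) 1)"
    by (intro Pa_shift) (auto simp: sh2_def split: prod.splits)
qed

lemma allk_V: "P (Poly_Mapping.single v 1) \<Longrightarrow> allk P (V v)"
  unfolding V_def by (rule allk_single)

lemma J_bad: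
  assumes "p \<in> J n"
  shows "allk badm p"
proof -
  let ?I = "{p :: 'a::comm_ring_1 dpoly. allk (Pa n) p \<and> allk badm p}"
  have gen1: "delta1 x2 = (V (X2, 1, 0) :: 'a dpoly)"
    unfolding delta1_def x2_def dderiv_V by (simp add: sh1_def)
  have gen2: "delta2 x1 = (V (X1, 0, 1) :: 'a dpoly)"
    unfolding delta2_def x1_def dderiv_V by (simp add: sh2_def)
  have "?I \<in> {I. I \<subseteq> A_carrier n \<and> {delta1 x2, delta2 x1} \<subseteq> I \<and> 0 \<in> I \<and>
       (\<forall>a\<in>I. \<forall>b\<in>I. a + b \<in> I) \<and> (\<forall>r\<in>A_carrier n. \<forall>a\<in>I. r * a \<in> I) \<and>
       (\<forall>a\<in>I. delta1 a \<in> I) \<and> (\<forall>a\<in>I. delta2 a \<in> I)}"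
  proof (rule CollectI, intro conjI)
    show "?I \<subseteq> A_carrier n" unfolding A_carrier_allk by auto
    show "{delta1 x2, delta2 x1} \<subseteq> ?I" unfolding gen1 gen2
      by (auto intro!: allk_V simp: Pa_def allowed_var_def badm_def)
    show "0 \<in> ?I" by simp
    show "\<forall>a\<in>?I. \<forall>b\<in>?I. a + b \<in> ?I" by (auto intro: allk_add)
    show "\<forall>r\<in>A_carrier n. \<forall>a\<in>?I. r * a \<in> ?I"
    proof (intro ballI)
      fix r a :: "'a dpoly" assume r: "r \<in> A_carrier n" and a: "a \<in> ?I"
      have "allk (Pa n) (r * a)"
        by (rule allk_mult[of "Pa n" "Pa n"]) (use r a Pa_add in \<open>auto simp: A_carrier_allk\<close>)
      moreover have "allk badm (r * a)"
        by (rule allk_mult[of "\<lambda>_. True" badm]) (use a badm_add in \<open>auto simp: allk_def\<close>)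
      ultimately show "r * a \<in> ?I" by simp
    qed
    show "\<forall>a\<in>?I. delta1 a \<in> ?I" by (auto intro: Pa_delta1 Zb_delta1)
    show "\<forall>a\<in>?I. delta2 a \<in> ?I" by (auto intro: Pa_delta2 Zb_delta2)
  qed
  then have "J n \<subseteq> ?I" unfolding J_def diff_ideal_def
    apply -
    apply (drule Inter_lower)
    apply assumption
    done
  then show ?thesis using assms by auto
qed


lemma keys_two: "a \<noteq> b \<Longrightarrow> Poly_Mapping.keys (Poly_Mapping.single a (1::nat) + Poly_Mapping.single b 1) = {a, b}"
  by (auto simp: in_keys_iff lookup_add lookup_single when_def split: if_splits)

lemma x_V: "(x1 :: 'a::comm_ring_1 dpoly) * V w = Poly_Mapping.single (Poly_Mapping.single (X1,0,0) 1 + Poly_Mapping.single w 1) 1"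
  unfolding x1_def V_def by (simp add: mult_single)
lemma x2_V: "(x2 :: 'a::comm_ring_1 dpoly) * V w = Poly_Mapping.single (Poly_Mapping.single (X2,0,0) 1 + Poly_Mapping.single w 1) 1"
  unfolding x2_def V_def by (simp add: mult_single)

lemma dderiv_two:
  assumes "a \<noteq> b"
  shows "dderiv d (Poly_Mapping.single (Poly_Mapping.single a 1 + Poly_Mapping.single b 1) (1::'a::comm_ring_1))
     = Poly_Mapping.single (Poly_Mapping.single b 1 + Poly_Mapping.single (d a) 1) 1
     + Poly_Mapping.single (Poly_Mapping.single a 1 + Poly_Mapping.single (d b) 1) 1"
proof -
  have la: "Poly_Mapping.lookup (Poly_Mapping.single a 1 + Poly_Mapping.single b (1::nat)) a = 1"
    using assms by (simp add: lookup_add lookup_single)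
  have lb: "Poly_Mapping.lookup (Poly_Mapping.single a 1 + Poly_Mapping.single b (1::nat)) b = 1"
    using assms by (simp add: lookup_add lookup_single)
  show ?thesis
    unfolding dderiv_single keys_two[OF assms]
    using assms by (simp add: lookup_add lookup_single when_def)
qed

lemma key2_step:
  "allk badm (delta2 ((x1 :: 'a::comm_ring_1 dpoly) * V (Q k, p, r)) - x1 * V (Q k, p, Suc r))"
proof -
  have "delta2 ((x1 :: 'a dpoly) * V (Q k, p, r)) - x1 * V (Q k, p, Suc r)
     = Poly_Mapping.single (Poly_Mapping.single (Q k, p, r) 1 + Poly_Mapping.single (X1, 0, 1) 1) 1"
    unfolding x_V delta2_def by (subst dderiv_two) (auto simp: sh2_def)
  moreover have "badm (Poly_Mapping.single (Q k, p, r) 1 + Poly_Mapping.single (X1, 0, 1) 1)"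
    by (rule badm_add) (simp add: badm_def)
  ultimately show ?thesis by (simp add: allk_single)
qed

lemma key1_step:
  "allk badm (delta1 ((x2 :: 'a::comm_ring_1 dpoly) * V (Q k, p, r)) - x2 * V (Q k, Suc p, r))"
proof -
  have "delta1 ((x2 :: 'a dpoly) * V (Q k, p, r)) - x2 * V (Q k, Suc p, r)
     = Poly_Mapping.single (Poly_Mapping.single (Q k, p, r) 1 + Poly_Mapping.single (X2, 1, 0) 1) 1"
    unfolding x2_V delta1_def by (subst dderiv_two) (auto simp: sh1_def)
  moreover have "badm (Poly_Mapping.single (Q k, p, r) 1 + Poly_Mapping.single (X2, 1, 0) 1)"
    by (rule badm_add) (simp add: badm_def)
  ultimately show ?thesis by (simp add: allk_single)
qed

lemma delta1_diff: "delta1 (p - r) = delta1 p - delta1 r" unfolding delta1_def by (rule dderiv_diff)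
lemma delta2_diff: "delta2 (p - r) = delta2 p - delta2 r" unfolding delta2_def by (rule dderiv_diff)

lemma key2: "allk badm ((delta2 ^^ b) ((x1 :: 'a::comm_ring_1 dpoly) * V (Q k, p, r)) - x1 * V (Q k, p, r + b))"
proof (induction b)
  case 0 then show ?case by simp
next
  case (Suc b)
  let ?A = "(delta2 ^^ b) ((x1 :: 'a dpoly) * V (Q k, p, r))"
  have "(delta2 ^^ Suc b) ((x1 :: 'a dpoly) * V (Q k, p, r)) - x1 * V (Q k, p, r + Suc b)
    = delta2 (?A - x1 * V (Q k, p, r + b)) + (delta2 (x1 * V (Q k, p, r + b)) - x1 * V (Q k, p, Suc (r + b)))"
    by (simp add: delta2_diff)
  then show ?case using Suc Zb_delta2 key2_step allk_add by metis
qed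

lemma key1: "allk badm ((delta1 ^^ a) ((x2 :: 'a::comm_ring_1 dpoly) * V (Q k, p, r)) - x2 * V (Q k, p + a, r))"
proof (induction a)
  case 0 then show ?case by simp
next
  case (Suc a)
  let ?A = "(delta1 ^^ a) ((x2 :: 'a dpoly) * V (Q k, p, r))"
  have "(delta1 ^^ Suc a) ((x2 :: 'a dpoly) * V (Q k, p, r)) - x2 * V (Q k, p + Suc a, r)
    = delta1 (?A - x2 * V (Q k, p + a, r)) + (delta1 (x2 * V (Q k, p + a, r)) - x2 * V (Q k, Suc (p + a), r))"
    by (simp add: delta1_diff)
  then show ?case using Suc Zb_delta1 key1_step allk_add by metis
qed

lemma pow_V1: "(delta1 ^^ a) (V (y, p, r)) = (V (y, p + a, r) :: 'a::comm_ring_1 dpoly)"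
  by (induction a) (auto simp: delta1_def dderiv_V sh1_def)
lemma pow_V2: "(delta2 ^^ b) (V (y, p, r)) = (V (y, p, r + b) :: 'a::comm_ring_1 dpoly)"
  by (induction b) (auto simp: delta2_def dderiv_V sh2_def)
lemma pow_diff1: "(delta1 ^^ a) (p - r) = (delta1 ^^ a) p - (delta1 ^^ a) r"
  by (induction a) (auto simp: delta1_diff)
lemma pow_diff2: "(delta2 ^^ a) (p - r) = (delta2 ^^ a) p - (delta2 ^^ a) r"
  by (induction a) (auto simp: delta2_diff)


lemma mstep_det:
  assumes mm: "minsky_machine n M" and s1: "mstep M c d1" and s2: "mstep M c d2"
  shows "d1 = d2"
proof -
  obtain i a b where c: "c = (i, a, b)" by (cases c)
  obtain j1 a1 b1 where d1: "d1 = (j1, a1, b1)" by (cases d1)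
  obtain j2 a2 b2 where d2: "d2 = (j2, a2, b2)" by (cases d2)
  from s1 obtain e s j \<alpha> \<beta> where c1: "(i, e, s, j, \<alpha>, \<beta>) \<in> M" "(e = 1 \<longleftrightarrow> a = 0)" "(s = 1 \<longleftrightarrow> b = 0)"
      "j1 = j" "int a1 = int a + \<alpha>" "int b1 = int b + \<beta>"
    unfolding mstep_def c d1 by auto
  from s2 obtain e' s' j' \<alpha>' \<beta>' where c2: "(i, e', s', j', \<alpha>', \<beta>') \<in> M" "(e' = 1 \<longleftrightarrow> a = 0)" "(s' = 1 \<longleftrightarrow> b = 0)"
      "j2 = j'" "int a2 = int a + \<alpha>'" "int b2 = int b + \<beta>'"
    unfolding mstep_def c d2 by auto
  have v1: "valid_cmd n (i, e, s, j, \<alpha>, \<beta>)" and v2: "valid_cmd n (i, e', s', j', \<alpha>', \<beta>')"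
    using mm c1(1) c2(1) unfolding minsky_machine_def by auto
  have "e = e'" "s = s'" using v1 v2 c1(2,3) c2(2,3) unfolding valid_cmd_def by auto
  then have "(i, e, s, j, \<alpha>, \<beta>) = (i, e', s', j', \<alpha>', \<beta>')"
  proof -
    have u: "\<forall>c\<in>M. \<forall>c'\<in>M. fst c = fst c' \<and> fst (snd c) = fst (snd c') \<and>
        fst (snd (snd c)) = fst (snd (snd c')) \<longrightarrow> c = c'"
      using mm unfolding minsky_machine_def by blast
    show ?thesis using u[rule_format, OF c1(1) c2(1)] \<open>e = e'\<close> \<open>s = s'\<close> by simp
  qed
  then have e: "j = j'" "\<alpha> = \<alpha>'" "\<beta> = \<beta>'" by simp_all
  have "int a1 = int a2" unfolding c1(5) c2(5) e(2) by (rule refl)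
  moreover have "int b1 = int b2" unfolding c1(6) c2(6) e(3) by (rule refl)
  ultimately have "a1 = a2" "b1 = b2" by simp_all
  then show ?thesis unfolding d1 d2 c1(4) c2(4) e(1) by (simp only: \<open>a1 = a2\<close> \<open>b1 = b2\<close>)
qed

definition orb :: "cmd set \<Rightarrow> config \<Rightarrow> config set" where
  "orb M c0 = {c. \<exists>k l z. (mstep M ^^ k) c0 z \<and> (mstep M ^^ l) c z}"

lemma orbI: "(mstep M ^^ k) c0 z \<Longrightarrow> (mstep M ^^ l) c z \<Longrightarrow> c \<in> orb M c0"
  unfolding orb_def mem_Collect_eq by (rule exI, rule exI, rule exI, rule conjI, assumption+)

lemma orbE: "c \<in> orb M c0 \<Longrightarrow> (\<And>k l z. (mstep M ^^ k) c0 z \<Longrightarrow> (mstep M ^^ l) c z \<Longrightarrow> P) \<Longrightarrow> P"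
  unfolding orb_def mem_Collect_eq by (elim exE conjE)

lemma orb_step:
  assumes mm: "minsky_machine n M" and st: "mstep M c c'"
  shows "c \<in> orb M c0 \<longleftrightarrow> c' \<in> orb M c0"
proof
  assume "c' \<in> orb M c0"
  then obtain k l z where kz: "(mstep M ^^ k) c0 z" and lz: "(mstep M ^^ l) c' z" by (rule orbE)
  show "c \<in> orb M c0" by (rule orbI[OF kz relpowp_Suc_I2[OF st lz]])
next
  assume "c \<in> orb M c0"
  then obtain k l z where kz: "(mstep M ^^ k) c0 z" and lz: "(mstep M ^^ l) c z" by (rule orbE)
  show "c' \<in> orb M c0"
  proof (cases l)
    case 0
    then have "z = c" using lz by simp
    then have "(mstep M ^^ Suc k) c0 c'" using relpowp_Suc_I[OF kz] st by simp
    then show ?thesis by (rule orbI) (rule relpowp_0_I)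
  next
    case (Suc l')
    then obtain y where y: "mstep M c y" "(mstep M ^^ l') y z" using lz relpowp_Suc_E2 by metis
    have "y = c'" by (rule mstep_det[OF mm y(1) st])
    then show ?thesis using orbI[OF kz] y(2) by simp
  qed
qed


lemma no_step_0:
  assumes mm: "minsky_machine n M"
  shows "\<not> mstep M (0, a, b) d"
proof
  assume st: "mstep M (0, a, b) d"
  obtain j' a' b' where d: "d = (j', a', b')" by (cases d)
  from st obtain e s j \<alpha> \<beta> where c: "(0, e, s, j, \<alpha>, \<beta>) \<in> M" unfolding mstep_def d by auto
  have "\<forall>c\<in>M. valid_cmd n c" using mm unfolding minsky_machine_def by blast
  then have "valid_cmd n (0, e, s, j, \<alpha>, \<beta>)" using c by blast
  then show False unfolding valid_cmd_def by simp
qed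

lemma cf_notin:
  assumes mm: "minsky_machine n M" and rf: "runs_forever M c0"
  shows "(0, a, b) \<notin> orb M c0"
proof
  assume "(0, a, b) \<in> orb M c0"
  then obtain k l z where kz: "(mstep M ^^ k) c0 z" and lz: "(mstep M ^^ l) (0, a, b) z"
    by (rule orbE)
  have "l = 0"
  proof (rule ccontr)
    assume "l \<noteq> 0"
    then obtain l' where "l = Suc l'" by (cases l) auto
    then obtain y where "mstep M (0, a, b) y" using lz relpowp_Suc_E2 by metis
    then show False using no_step_0[OF mm] by blast
  qed
  then have "z = (0, a, b)" using lz by simp
  then have "(mstep M)\<^sup>*\<^sup>* c0 (0, a, b)" using relpowp_imp_rtranclp[OF kz] by simp
  then obtain d' where "mstep M (0, a, b) d'" using rf unfolding runs_forever_def by blast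
  then show False using no_step_0[OF mm] by blast
qed

lemma c0_in: "c0 \<in> orb M c0"
  by (rule orbI) (rule relpowp_0_I)+

definition cmono :: "config \<Rightarrow> (dvar \<Rightarrow>\<^sub>0 nat)" where
  "cmono c = (case c of (i, a, b) \<Rightarrow> Poly_Mapping.single (X1,0,0) 1 + Poly_Mapping.single (X2,0,0) 1
      + Poly_Mapping.single (Q i, a, b) 1)"

definition phi :: "config set \<Rightarrow> 'a::comm_ring_1 dpoly \<Rightarrow> 'a" where
  "phi C p = (\<Sum>m\<in>Poly_Mapping.keys p. if m \<in> cmono ` C then Poly_Mapping.lookup p m else 0)"

lemma phi_alt:
  assumes "finite F" "Poly_Mapping.keys p \<subseteq> F"
  shows "phi C p = (\<Sum>m\<in>F. if m \<in> cmono ` C then Poly_Mapping.lookup p m else 0)"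
  unfolding phi_def by (rule sum.mono_neutral_left[OF assms]) (auto simp: in_keys_iff)

lemma phi_add: "phi C (p + r) = phi C p + phi C r"
proof -
  let ?F = "Poly_Mapping.keys p \<union> Poly_Mapping.keys r"
  have f: "finite ?F" by simp
  show ?thesis
    unfolding phi_alt[OF f keys_add] phi_alt[OF f Un_upper1] phi_alt[OF f Un_upper2]
    by (simp add: sum.distrib[symmetric], intro sum.cong) (auto simp: lookup_add)
qed

lemma phi_diff: "phi C (p - r) = phi C p - phi C r"
proof -
  let ?F = "Poly_Mapping.keys p \<union> Poly_Mapping.keys r"
  have f: "finite ?F" by simp
  show ?thesis
    unfolding phi_alt[OF f keys_diff] phi_alt[OF f Un_upper1] phi_alt[OF f Un_upper2]
    by (simp add: sum_subtractf[symmetric], intro sum.cong) (auto simp: lookup_minus)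
qed

lemma phi_0[simp]: "phi C 0 = 0" by (simp add: phi_def)

lemma phi_sum: "phi C (sum f K) = (\<Sum>k\<in>K. phi C (f k))"
  by (induction K rule: infinite_finite_induct) (auto simp: phi_add)

lemma cmono_not_bad: "\<not> badm (cmono c)"
proof
  obtain i a b where c: "c = (i, a, b)" by (cases c)
  assume "badm (cmono c)"
  then obtain v where v: "v \<in> Poly_Mapping.keys (cmono c)" "badv v" unfolding badm_def by blast
  have "v \<in> {(X1,0,0), (X2,0,0), (Q i, a, b)}"
    using v(1) keys_add[of "Poly_Mapping.single (X1,0,0) (1::nat) + Poly_Mapping.single (X2,0,0) 1" "Poly_Mapping.single (Q i, a, b) 1"]
      keys_add[of "Poly_Mapping.single (X1,0,0) (1::nat)" "Poly_Mapping.single (X2,0,0) 1"]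
    unfolding c cmono_def by auto
  then show False using v(2) by auto
qed

lemma phi_bad: "allk badm p \<Longrightarrow> phi C p = 0"
  unfolding phi_def allk_def
proof (intro sum.neutral ballI)
  fix m assume "\<forall>m\<in>Poly_Mapping.keys p. badm m" "m \<in> Poly_Mapping.keys p"
  then have "m \<notin> cmono ` C" using cmono_not_bad by auto
  then show "(if m \<in> cmono ` C then Poly_Mapping.lookup p m else 0) = 0" by simp
qed

lemma inj_cmono: "inj cmono"
proof
  fix c c' assume eq: "cmono c = cmono c'"
  obtain i a b where c: "c = (i, a, b)" by (cases c)
  obtain i' a' b' where c': "c' = (i', a', b')" by (cases c')
  have "Poly_Mapping.lookup (cmono c) (Q i, a, b) = 1"
    unfolding c cmono_def by (simp add: lookup_add lookup_single)
  then have "Poly_Mapping.lookup (cmono c') (Q i, a, b) = 1" using eq by simp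
  then have "(Q i, a, b) = (Q i', a', b')" unfolding c' cmono_def
    by (simp add: lookup_add lookup_single when_def split: if_splits)
  then show "c = c'" unfolding c c' by simp
qed

lemma phi_single: "phi C (Poly_Mapping.single (cmono u) k) = (if u \<in> C then k else 0)"
proof (cases "k = 0")
  case True then show ?thesis by simp
next
  case False
  have "phi C (Poly_Mapping.single (cmono u) k) = (if cmono u \<in> cmono ` C then k else 0)"
    unfolding phi_def using False by simp
  also have "(cmono u \<in> cmono ` C) = (u \<in> C)" by (rule inj_image_mem_iff[OF inj_cmono])
  finally show ?thesis .
qed

lemma cmono_eq: "cmono (i, a, b) = Poly_Mapping.single (X1,0,0) 1 + Poly_Mapping.single (X2,0,0) 1
      + Poly_Mapping.single (Q i, a, b) 1"
  unfolding cmono_def by (simp only: prod.case)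

lemma x1x2V: "(x1 :: 'a::comm_ring_1 dpoly) * x2 * V (Q i, a, b) = Poly_Mapping.single (cmono (i, a, b)) 1"
  unfolding x1_def x2_def V_def cmono_eq by (simp only: mult_single mult_1)

lemma const_single: "const k * Poly_Mapping.single m (1::'a::comm_ring_1) = Poly_Mapping.single m k"
  unfolding const_def by (simp add: mult_single)

lemma Zb_mult: "allk badm p \<Longrightarrow> allk badm (r * p)"
  by (rule allk_mult[of "\<lambda>_. True" badm]) (auto simp: allk_def intro: badm_add)


lemma gcmd_eq: "gcmd (i, e, s, j, \<alpha>, \<beta>) = x1 ^ e * x2 ^ s * V (Q i, 1 - e, 1 - s)
     - x1 ^ e * x2 ^ s * V (Q j, nat (1 - int e + \<alpha>), nat (1 - int s + \<beta>))"
  unfolding gcmd_def by (simp only: prod.case)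

lemma act00: "actW 0 0 a b (gcmd (i, 0, 0, j, \<alpha>, \<beta>)) =
   (x1 :: 'a::comm_ring_1 dpoly) * x2 * V (Q i, Suc a, Suc b) - x1 * x2 * V (Q j, nat (1 + \<alpha>) + a, nat (1 + \<beta>) + b)"
  unfolding actW_def gcmd_eq by (simp add: pow_diff1 pow_diff2 pow_V1 pow_V2 right_diff_distrib)

lemma act11: "actW 1 1 0 0 (gcmd (i, 1, 1, j, \<alpha>, \<beta>)) =
   (x1 :: 'a::comm_ring_1 dpoly) * x2 * V (Q i, 0, 0) - x1 * x2 * V (Q j, nat \<alpha>, nat \<beta>)"
  unfolding actW_def gcmd_eq by simp

lemma act10: "allk badm (actW 1 0 0 b (gcmd (i, 1, 0, j, \<alpha>, \<beta>)) -
   ((x1 :: 'a::comm_ring_1 dpoly) * x2 * V (Q i, 0, 0 + 1 + b) - x1 * x2 * V (Q j, nat \<alpha>, nat (1 + \<beta>) + b)))"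
proof -
  let ?D1 = "(delta2 ^^ b) ((x1 :: 'a dpoly) * V (Q i, 0, 1))"
  let ?D2 = "(delta2 ^^ b) ((x1 :: 'a dpoly) * V (Q j, nat \<alpha>, nat (1 + \<beta>)))"
  have "actW 1 0 0 b (gcmd (i, 1, 0, j, \<alpha>, \<beta>)) = x2 * (?D1 - ?D2)"
    unfolding actW_def gcmd_eq by (simp add: pow_diff2)
  then have "actW 1 0 0 b (gcmd (i, 1, 0, j, \<alpha>, \<beta>)) -
   ((x1 :: 'a::comm_ring_1 dpoly) * x2 * V (Q i, 0, 0 + 1 + b) - x1 * x2 * V (Q j, nat \<alpha>, nat (1 + \<beta>) + b))
    = x2 * ((?D1 - x1 * V (Q i, 0, 1 + b)) - (?D2 - x1 * V (Q j, nat \<alpha>, nat (1 + \<beta>) + b)))"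
    by (simp add: algebra_simps)
  moreover have "allk badm ((?D1 - x1 * V (Q i, 0, 1 + b)) - (?D2 - x1 * V (Q j, nat \<alpha>, nat (1 + \<beta>) + b)))"
    by (intro allk_diff key2)
  ultimately show ?thesis by (simp add: Zb_mult)
qed

lemma act01: "allk badm (actW 0 1 a 0 (gcmd (i, 0, 1, j, \<alpha>, \<beta>)) -
   ((x1 :: 'a::comm_ring_1 dpoly) * x2 * V (Q i, 1 + a, 0) - x1 * x2 * V (Q j, nat (1 + \<alpha>) + a, nat \<beta>)))"
proof -
  let ?D1 = "(delta1 ^^ a) ((x2 :: 'a dpoly) * V (Q i, 1, 0))"
  let ?D2 = "(delta1 ^^ a) ((x2 :: 'a dpoly) * V (Q j, nat (1 + \<alpha>), nat \<beta>))"
  have "actW 0 1 a 0 (gcmd (i, 0, 1, j, \<alpha>, \<beta>)) = x1 * (?D1 - ?D2)"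
    unfolding actW_def gcmd_eq by (simp add: pow_diff1)
  then have "actW 0 1 a 0 (gcmd (i, 0, 1, j, \<alpha>, \<beta>)) -
   ((x1 :: 'a::comm_ring_1 dpoly) * x2 * V (Q i, 1 + a, 0) - x1 * x2 * V (Q j, nat (1 + \<alpha>) + a, nat \<beta>))
    = x1 * ((?D1 - x2 * V (Q i, 1 + a, 0)) - (?D2 - x2 * V (Q j, nat (1 + \<alpha>) + a, nat \<beta>)))"
    by (simp add: algebra_simps)
  moreover have "allk badm ((?D1 - x2 * V (Q i, 1 + a, 0)) - (?D2 - x2 * V (Q j, nat (1 + \<alpha>) + a, nat \<beta>)))"
    by (intro allk_diff key1)
  ultimately show ?thesis by (simp add: Zb_mult)
qed


lemma phi_generic:
  assumes mm: "minsky_machine n M"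
    and bad: "allk badm (P - ((x1 :: 'a::comm_ring_1 dpoly) * x2 * V (Q i, a, b) - x1 * x2 * V (Q i', a', b')))"
    and st: "mstep M (i, a, b) (i', a', b')"
  shows "phi (orb M c0) (const k * P) = 0"
proof -
  let ?D = "(x1 :: 'a dpoly) * x2 * V (Q i, a, b) - x1 * x2 * V (Q i', a', b')"
  have "const k * P = const k * (P - ?D) + (const k * Poly_Mapping.single (cmono (i, a, b)) 1
      - const k * Poly_Mapping.single (cmono (i', a', b')) 1)"
    unfolding x1x2V by (simp add: algebra_simps)
  then have "phi (orb M c0) (const k * P) = phi (orb M c0) (const k * (P - ?D)) +
     (phi (orb M c0) (Poly_Mapping.single (cmono (i, a, b)) k) - phi (orb M c0) (Poly_Mapping.single (cmono (i', a', b')) k))"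
    by (simp add: phi_add phi_diff const_single)
  also have "phi (orb M c0) (const k * (P - ?D)) = 0" by (rule phi_bad[OF Zb_mult[OF bad]])
  also have "(i, a, b) \<in> orb M c0 \<longleftrightarrow> (i', a', b') \<in> orb M c0" by (rule orb_step[OF mm st])
  then have "phi (orb M c0) (Poly_Mapping.single (cmono (i, a, b)) k) = phi (orb M c0) (Poly_Mapping.single (cmono (i', a', b')) k)"
    by (simp add: phi_single)
  finally show ?thesis by simp
qed

lemma term_zero:
  assumes mm: "minsky_machine n M" and cM: "c \<in> M" and w: "inW (cmd_e c) (cmd_s c) a b"
  shows "phi (orb M c0) (const k * actW (cmd_e c) (cmd_s c) a b (gcmd c :: 'a::comm_ring_1 dpoly)) = 0"
proof -
  obtain i e s j \<alpha> \<beta> where c: "c = (i, e, s, j, \<alpha>, \<beta>)" by (cases c) auto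
  have v: "valid_cmd n c" using mm cM unfolding minsky_machine_def by blast
  then have es: "e \<in> {0, 1}" "s \<in> {0, 1}" "\<alpha> \<in> {-1, 0, 1}" "\<beta> \<in> {-1, 0, 1}"
      "e = 1 \<longrightarrow> \<alpha> \<ge> 0" "s = 1 \<longrightarrow> \<beta> \<ge> 0"
    unfolding c valid_cmd_def by auto
  have ce: "cmd_e c = e" "cmd_s c = s" unfolding c cmd_e_def cmd_s_def by simp_all
  have cM': "(i, e, s, j, \<alpha>, \<beta>) \<in> M" using cM c by simp
  have w': "(e = 1 \<longrightarrow> a = 0) \<and> (s = 1 \<longrightarrow> b = 0)" using w unfolding ce inW_def .
  consider "e = 0" "s = 0" | "e = 1" "s = 1" | "e = 1" "s = 0" | "e = 0" "s = 1" using es by auto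
  then show ?thesis
  proof cases
    case 1
    have st: "mstep M (i, Suc a, Suc b) (j, nat (1 + \<alpha>) + a, nat (1 + \<beta>) + b)"
      unfolding mstep_def prod.case
      by (rule exI[of _ 0], rule exI[of _ 0], rule exI[of _ j], rule exI[of _ \<alpha>], rule exI[of _ \<beta>])
         (use cM' 1 es in auto)
    show ?thesis unfolding ce unfolding c 1 act00
      by (rule phi_generic[OF mm _ st]) simp
  next
    case 2
    then have ab: "a = 0" "b = 0" using w' by auto
    have st: "mstep M (i, 0, 0) (j, nat \<alpha>, nat \<beta>)"
      unfolding mstep_def prod.case
      by (rule exI[of _ 1], rule exI[of _ 1], rule exI[of _ j], rule exI[of _ \<alpha>], rule exI[of _ \<beta>])
         (use cM' 2 es in auto)
    show ?thesis unfolding ce unfolding c 2 ab act11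
      by (rule phi_generic[OF mm _ st]) simp
  next
    case 3
    then have ab: "a = 0" using w' by auto
    have st: "mstep M (i, 0, 0 + 1 + b) (j, nat \<alpha>, nat (1 + \<beta>) + b)"
      unfolding mstep_def prod.case
      by (rule exI[of _ 1], rule exI[of _ 0], rule exI[of _ j], rule exI[of _ \<alpha>], rule exI[of _ \<beta>])
         (use cM' 3 es in auto)
    show ?thesis unfolding ce unfolding c 3 ab
      by (rule phi_generic[OF mm act10 st])
  next
    case 4
    then have ab: "b = 0" using w' by auto
    have st: "mstep M (i, 1 + a, 0) (j, nat (1 + \<alpha>) + a, nat \<beta>)"
      unfolding mstep_def prod.case
      by (rule exI[of _ 0], rule exI[of _ 1], rule exI[of _ j], rule exI[of _ \<alpha>], rule exI[of _ \<beta>])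
         (use cM' 4 es in auto)
    show ?thesis unfolding ce unfolding c 4 ab
      by (rule phi_generic[OF mm act01 st])
  qed
qed


theorem lemma5:
  fixes n :: nat and M :: "cmd set" and S :: "nat set" and m :: nat
  assumes "1 \<le> n"
    and "minsky_machine n M"
    and "acyclic_machine M"
    and "\<forall>x. (x \<in> S \<longrightarrow> reaches M (1, 2 ^ (2 ^ x), 0) (0, 1, 0)) \<and>
             (x \<notin> S \<longrightarrow> runs_forever M (1, 2 ^ (2 ^ x), 0))"
    and "\<exists>K (coef :: cmd \<times> nat \<times> nat \<Rightarrow> 'a::comm_ring_1).
           finite K \<and>
           (\<forall>(c, a, b) \<in> K. c \<in> M \<and> inW (cmd_e c) (cmd_s c) a b) \<and>
           B_eq n (gm m)
             (\<Sum>(c, a, b) \<in> K. const (coef (c, a, b)) * actW (cmd_e c) (cmd_s c) a b (gcmd c))"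
  shows "m \<in> S"
proof (rule ccontr)
  assume mS: "m \<notin> S"
  note mm = assms(2)
  define c0 :: config where "c0 = (1, 2 ^ (2 ^ m), 0)"
  have rf: "runs_forever M c0" using assms(4) mS unfolding c0_def by blast
  obtain K and coef :: "cmd \<times> nat \<times> nat \<Rightarrow> 'a" where fin: "finite K"
    and memb: "\<forall>(c, a, b) \<in> K. c \<in> M \<and> inW (cmd_e c) (cmd_s c) a b"
    and beq: "B_eq n (gm m)
             (\<Sum>(c, a, b) \<in> K. const (coef (c, a, b)) * actW (cmd_e c) (cmd_s c) a b (gcmd c))"
    using assms(5) by blast
  let ?C = "orb M c0"
  let ?Sum = "(\<Sum>(c, a, b) \<in> K. const (coef (c, a, b)) * actW (cmd_e c) (cmd_s c) a b (gcmd c :: 'a dpoly))"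
  have "gm m - ?Sum \<in> J n" using beq unfolding B_eq_def .
  then have z: "phi ?C (gm m - ?Sum) = 0" by (rule phi_bad[OF J_bad])
  have s0: "phi ?C ?Sum = 0"
    unfolding phi_sum
  proof (rule sum.neutral, rule ballI)
    fix x assume x: "x \<in> K"
    obtain c a b where xe: "x = (c, a, b)" by (cases x) auto
    have "c \<in> M" "inW (cmd_e c) (cmd_s c) a b" using memb x xe by auto
    then show "phi ?C ((\<lambda>(c, a, b). const (coef (c, a, b)) * actW (cmd_e c) (cmd_s c) a b (gcmd c :: 'a dpoly)) x) = 0"
      unfolding xe prod.case by (rule term_zero[OF mm])
  qed
  have geq: "gm m = Poly_Mapping.single (cmono c0) 1 - Poly_Mapping.single (cmono (0, 1, 0)) (1::'a)"
    unfolding gm_def c0_def x1x2V by simp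
  have g1: "phi ?C (gm m :: 'a dpoly) = 1"
    unfolding geq phi_diff phi_single using c0_in[of c0 M] cf_notin[OF mm rf, of 1 0] by simp
  have "phi ?C (gm m - ?Sum) = 1" using g1 s0 by (simp add: phi_diff)
  then show False using z by simp
qed

end
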